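(* Let $R_1,\dots,R_6$ be six rods in $\mathbb{R}^3$ ($n_r^i=1$ for all $i$) in generic position. Suppose they intersect in the strutted configuration in which each of $R_3,R_4,R_5,R_6$ joins $R_1$ to $R_2$: there are points $\mathbf p_1\in R_1\cap R_3$, $\mathbf p_2\in R_2\cap R_3$, $\mathbf p_3\in R_1\cap R_4$, $\mathbf p_4\in R_2\cap R_4$, $\mathbf p_5\in R_1\cap R_5$, $\mathbf p_6\in R_2\cap R_5$, $\mathbf p_7\in R_1\cap R_6$, $\mathbf p_8\in R_2\cap R_6$. Then the composite body $R_1\cup\cdots\cup R_6$ is rigid.
   Context: A rod is a straight segment in $\mathbb{R}^3$ that moves as a rigid body; $n_r^i$ denotes the number of rods in component $R_i$. Positions are generic apart from the stated incidences. A union of rods is rigid if it is infinitesimally rigid in the following sense. An infinitesimal motion is admissible if it preserves, to first order, distances between points on each rod, and if points lying on a common rod keep fixed relative position along the rod to first order. For example, $\mathbf p_3$ and $\mathbf p_5$ stay fixed relative to $\mathbf p_1,\mathbf p_7$ on $R_1$, and $\mathbf p_4,\mathbf p_6$ stay fixed relative to $\mathbf p_2,\mathbf p_8$ on $R_2$. The union is rigid if every admissible infinitesimal motion is a Euclidean rigid motion of the whole union. Equivalently, the composite rigidity matrix has a right nullspace of dimension $6$. *)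

theory Defs
  imports "HOL-Analysis.Analysis"
begin

definition euclid_motion_on :: "(real^3) set \<Rightarrow> (real^3 \<Rightarrow> real^3) \<Rightarrow> bool" where
  "euclid_motion_on S u \<longleftrightarrow> (\<exists>\<omega> v. \<forall>x\<in>S. u x = cross3 \<omega> x + v)"

text \<open>Admissible infinitesimal motion of a union of rods R i (i in I): each rod
  moves as a rigid body (velocity field u i on the rod), and every point common
  to two rods has the same velocity as a point of either rod (it keeps its fixed
  position along each rod).\<close>
definition admissible_motion ::
  "nat set \<Rightarrow> (nat \<Rightarrow> (real^3) set) \<Rightarrow> (nat \<Rightarrow> real^3 \<Rightarrow> real^3) \<Rightarrow> bool" where
  "admissible_motion I R u \<longleftrightarrow>
     (\<forall>i\<in>I. euclid_motion_on (R i) (u i)) \<and>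
     (\<forall>i\<in>I. \<forall>j\<in>I. \<forall>x\<in>R i \<inter> R j. u i x = u j x)"

definition rigid_union :: "nat set \<Rightarrow> (nat \<Rightarrow> (real^3) set) \<Rightarrow> bool" where
  "rigid_union I R \<longleftrightarrow>
     (\<forall>u. admissible_motion I R u \<longrightarrow>
        (\<exists>\<omega> v. \<forall>i\<in>I. \<forall>x\<in>R i. u i x = cross3 \<omega> x + v))"

text \<open>Parameters of the strutted configuration: R1 is the line a + t d carrying
  p1,p3,p5,p7 (parameters t$1..t$4), R2 is the line b + s e carrying p2,p4,p6,p8
  (parameters s$1..s$4).\<close>
type_synonym strut_param = "(real^3) \<times> (real^3) \<times> (real^3) \<times> (real^3) \<times> (real^4) \<times> (real^4)"

definition strut_pt1 :: "strut_param \<Rightarrow> 4 \<Rightarrow> real^3" where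
  "strut_pt1 \<theta> k = (case \<theta> of (a, d, b, e, t, s) \<Rightarrow> a + (t $ k) *\<^sub>R d)"

definition strut_pt2 :: "strut_param \<Rightarrow> 4 \<Rightarrow> real^3" where
  "strut_pt2 \<theta> k = (case \<theta> of (a, d, b, e, t, s) \<Rightarrow> b + (s $ k) *\<^sub>R e)"

definition strut_rods :: "strut_param \<Rightarrow> nat \<Rightarrow> (real^3) set" where
  "strut_rods \<theta> i =
     (if i = 1 then convex hull (range (strut_pt1 \<theta>))
      else if i = 2 then convex hull (range (strut_pt2 \<theta>))
      else if i = 3 then closed_segment (strut_pt1 \<theta> 1) (strut_pt2 \<theta> 1)
      else if i = 4 then closed_segment (strut_pt1 \<theta> 2) (strut_pt2 \<theta> 2)
      else if i = 5 then closed_segment (strut_pt1 \<theta> 3) (strut_pt2 \<theta> 3)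
      else if i = 6 then closed_segment (strut_pt1 \<theta> 4) (strut_pt2 \<theta> 4)
      else {})"

end

theory Submission
  imports Defs
begin

unbundle cross3_syntax

lemma differentiable_bl_comp:
  "bounded_linear h \<Longrightarrow> f differentiable F \<Longrightarrow> (\<lambda>x. h (f x)) differentiable F"
  unfolding differentiable_def by (blast intro: bounded_linear.has_derivative)

lemma differentiable_fst' [derivative_intros]:
  "f differentiable F \<Longrightarrow> (\<lambda>x. fst (f x)) differentiable F"
  by (rule differentiable_bl_comp[OF bounded_linear_fst])

lemma differentiable_snd' [derivative_intros]:
  "f differentiable F \<Longrightarrow> (\<lambda>x. snd (f x)) differentiable F"
  by (rule differentiable_bl_comp[OF bounded_linear_snd])

lemma differentiable_vec_nth' [derivative_intros]:
  "f differentiable F \<Longrightarrow> (\<lambda>x. (f x) $ i) differentiable F"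
  by (rule differentiable_bl_comp[OF bounded_linear_vec_nth])

definition v4 :: "real \<Rightarrow> real \<Rightarrow> real \<Rightarrow> real \<Rightarrow> real^4" where
  "v4 x1 x2 x3 x4 = x1 *\<^sub>R axis 1 1 + x2 *\<^sub>R axis 2 1 + x3 *\<^sub>R axis 3 1 + x4 *\<^sub>R axis 4 1"

lemma v4_nth [simp]: "v4 x1 x2 x3 x4 $ 1 = x1" "v4 x1 x2 x3 x4 $ 2 = x2"
  "v4 x1 x2 x3 x4 $ 3 = x3" "v4 x1 x2 x3 x4 $ 4 = x4"
  by (simp_all add: v4_def axis_def)

lemma v4_eta: "v4 (t$1) (t$2) (t$3) (t$4) = t"
  by (simp add: vec_eq_iff forall_4)

lemma differentiable_v4 [derivative_intros]:
  "f1 differentiable F \<Longrightarrow> f2 differentiable F \<Longrightarrow> f3 differentiable F \<Longrightarrow> f4 differentiable F \<Longrightarrow>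
   (\<lambda>x. v4 (f1 x) (f2 x) (f3 x) (f4 x)) differentiable F"
  unfolding v4_def by (intro derivative_intros differentiable_bl_comp[OF bounded_linear_scaleR_left])

definition Dr :: "real \<Rightarrow> real \<Rightarrow> real \<Rightarrow> real \<Rightarrow> real \<Rightarrow> real \<Rightarrow> real \<Rightarrow> real \<Rightarrow> real" where
  "Dr s1 s2 s3 s4 t1 t2 t3 t4 =
    (s2 - s1) * ((t3 - t1) * (s4*t4 - s1*t1) - (t4 - t1) * (s3*t3 - s1*t1))
  - (t2 - t1) * ((s3 - s1) * (s4*t4 - s1*t1) - (s4 - s1) * (s3*t3 - s1*t1))
  + (s2*t2 - s1*t1) * ((s3 - s1) * (t4 - t1) - (s4 - s1) * (t3 - t1))"

definition Kr :: "real \<Rightarrow> real \<Rightarrow> real \<Rightarrow> real \<Rightarrow> real \<Rightarrow> real \<Rightarrow> real" where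
  "Kr s1 s2 s3 t1 t2 t3 = (s2 - s1) * (t3 - t1) - (s3 - s1) * (t2 - t1)"

definition Lr :: "real \<Rightarrow> real \<Rightarrow> real \<Rightarrow> real \<Rightarrow> real \<Rightarrow> real \<Rightarrow> real" where
  "Lr s1 s2 s3 t1 t2 t3 = (s3 - s1) * (s2*t2 - s1*t1) - (s2 - s1) * (s3*t3 - s1*t1)"

lemma Dr_t4: "Dr s1 s2 s3 s4 t1 t2 t3 t4 = Dr s1 s2 s3 s4 t1 t2 t3 0 + t4 * (Lr s1 s2 s3 t1 t2 t3 + s4 * Kr s1 s2 s3 t1 t2 t3)"
  unfolding Dr_def Lr_def Kr_def by (simp add: algebra_simps)

lemma solve4:
  fixes g0 g1 g2 g3 :: real
  assumes h1: "g0 + s1*g1 + t1*g2 + s1*t1*g3 = 0"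
    and h2: "g0 + s2*g1 + t2*g2 + s2*t2*g3 = 0"
    and h3: "g0 + s3*g1 + t3*g2 + s3*t3*g3 = 0"
    and h4: "g0 + s4*g1 + t4*g2 + s4*t4*g3 = 0"
    and D: "Dr s1 s2 s3 s4 t1 t2 t3 t4 \<noteq> 0"
  shows "g0 = 0 \<and> g1 = 0 \<and> g2 = 0 \<and> g3 = 0"
proof -
  define x2 where "x2 = s2 - s1" define x3 where "x3 = s3 - s1" define x4 where "x4 = s4 - s1"
  define y2 where "y2 = t2 - t1" define y3 where "y3 = t3 - t1" define y4 where "y4 = t4 - t1"
  define z2 where "z2 = s2*t2 - s1*t1" define z3 where "z3 = s3*t3 - s1*t1" define z4 where "z4 = s4*t4 - s1*t1"
  have E2: "x2*g1 + y2*g2 + z2*g3 = 0" using h1 h2 unfolding x2_def y2_def z2_def by (simp add: algebra_simps)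
  have E3: "x3*g1 + y3*g2 + z3*g3 = 0" using h1 h3 unfolding x3_def y3_def z3_def by (simp add: algebra_simps)
  have E4: "x4*g1 + y4*g2 + z4*g3 = 0" using h1 h4 unfolding x4_def y4_def z4_def by (simp add: algebra_simps)
  have Deq: "Dr s1 s2 s3 s4 t1 t2 t3 t4 = x2*(y3*z4 - y4*z3) - y2*(x3*z4 - x4*z3) + z2*(x3*y4 - x4*y3)"
    unfolding Dr_def x2_def x3_def x4_def y2_def y3_def y4_def z2_def z3_def z4_def by (simp add: algebra_simps)
  have "(x2*(y3*z4 - y4*z3) - y2*(x3*z4 - x4*z3) + z2*(x3*y4 - x4*y3)) * g1
      = (y3*z4 - y4*z3)*(x2*g1 + y2*g2 + z2*g3) - (y2*z4 - y4*z2)*(x3*g1 + y3*g2 + z3*g3) + (y2*z3 - y3*z2)*(x4*g1 + y4*g2 + z4*g3)"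
    by (simp add: algebra_simps)
  then have G1: "g1 = 0" using E2 E3 E4 D Deq by simp
  have "(x2*(y3*z4 - y4*z3) - y2*(x3*z4 - x4*z3) + z2*(x3*y4 - x4*y3)) * g2
      = -(x3*z4 - x4*z3)*(x2*g1 + y2*g2 + z2*g3) + (x2*z4 - x4*z2)*(x3*g1 + y3*g2 + z3*g3) - (x2*z3 - x3*z2)*(x4*g1 + y4*g2 + z4*g3)"
    by (simp add: algebra_simps)
  then have G2: "g2 = 0" using E2 E3 E4 D Deq by simp
  have "(x2*(y3*z4 - y4*z3) - y2*(x3*z4 - x4*z3) + z2*(x3*y4 - x4*y3)) * g3
      = (x3*y4 - x4*y3)*(x2*g1 + y2*g2 + z2*g3) - (x2*y4 - x4*y2)*(x3*g1 + y3*g2 + z3*g3) + (x2*y3 - x3*y2)*(x4*g1 + y4*g2 + z4*g3)"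
    by (simp add: algebra_simps)
  then have G3: "g3 = 0" using E2 E3 E4 D Deq by simp
  show ?thesis using G1 G2 G3 h1 by simp
qed

lemma bar_full:
  fixes Wa Wb Va Vb a d b e :: "real^3" and s t :: real
  shows "(Wa \<times> (a + t *\<^sub>R d) + Va - (Wb \<times> (b + s *\<^sub>R e) + Vb)) \<bullet> ((a + t *\<^sub>R d) - (b + s *\<^sub>R e)) =
     ((Wb - Wa) \<bullet> (a \<times> b) + (Vb - Va) \<bullet> (b - a)) + s * ((Wb - Wa) \<bullet> (a \<times> e) + (Vb - Va) \<bullet> e)
        + t * ((Wb - Wa) \<bullet> (d \<times> b) - (Vb - Va) \<bullet> d) + s * t * ((Wb - Wa) \<bullet> (d \<times> e))"
  by (simp add: cross3_simps forall_3)

lemma decomp: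
  fixes w d e :: "real^3"
  shows "((d \<times> e) \<bullet> (d \<times> e)) *\<^sub>R w = ((w \<times> e) \<bullet> (d \<times> e)) *\<^sub>R d + ((d \<times> w) \<bullet> (d \<times> e)) *\<^sub>R e + (w \<bullet> (d \<times> e)) *\<^sub>R (d \<times> e)"
  by (simp add: cross3_simps forall_3)

lemma decomp2:
  fixes w c d e :: "real^3"
  shows "(c \<bullet> (d \<times> e)) *\<^sub>R w = (w \<bullet> c) *\<^sub>R (d \<times> e) + (w \<bullet> d) *\<^sub>R (e \<times> c) + (w \<bullet> e) *\<^sub>R (c \<times> d)"
  by (simp add: cross3_simps forall_3)

lemma final_alg:
  fixes Om Vv a d b e :: "real^3"
  assumes T: "(b - a) \<bullet> (d \<times> e) \<noteq> 0"
    and g0: "Om \<bullet> (a \<times> b) + Vv \<bullet> (b - a) = 0"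
    and g1: "Om \<bullet> (a \<times> e) + Vv \<bullet> e = 0"
    and g2: "Om \<bullet> (d \<times> b) - Vv \<bullet> d = 0"
    and g3: "Om \<bullet> (d \<times> e) = 0"
  shows "\<exists>\<alpha> \<beta>. Om = \<alpha> *\<^sub>R d + \<beta> *\<^sub>R e \<and> Vv = \<alpha> *\<^sub>R (a \<times> d) + \<beta> *\<^sub>R (b \<times> e)"
proof -
  define n where "n = d \<times> e"
  have n0: "n \<noteq> 0" using T unfolding n_def by auto
  hence nn: "n \<bullet> n \<noteq> 0" by simp
  define \<alpha> where "\<alpha> = ((Om \<times> e) \<bullet> n) / (n \<bullet> n)"
  define \<beta> where "\<beta> = ((d \<times> Om) \<bullet> n) / (n \<bullet> n)"
  have eq: "(n \<bullet> n) *\<^sub>R Om = ((Om \<times> e) \<bullet> n) *\<^sub>R d + ((d \<times> Om) \<bullet> n) *\<^sub>R e"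
    using decomp[of d e Om] g3 unfolding n_def by simp
  have "Om = (1 / (n \<bullet> n)) *\<^sub>R ((n \<bullet> n) *\<^sub>R Om)" using nn by simp
  also have "\<dots> = \<alpha> *\<^sub>R d + \<beta> *\<^sub>R e" unfolding eq \<alpha>_def \<beta>_def
    by (simp add: scaleR_right_distrib)
  finally have Om: "Om = \<alpha> *\<^sub>R d + \<beta> *\<^sub>R e" .
  define V' where "V' = Vv - (\<alpha> *\<^sub>R (a \<times> d) + \<beta> *\<^sub>R (b \<times> e))"
  have i0: "V' \<bullet> (b - a) = Om \<bullet> (a \<times> b) + Vv \<bullet> (b - a)"
    unfolding V'_def Om by (simp add: cross3_simps forall_3)
  have i1: "V' \<bullet> d = -(Om \<bullet> (d \<times> b) - Vv \<bullet> d)"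
    unfolding V'_def Om by (simp add: cross3_simps forall_3)
  have i2: "V' \<bullet> e = Om \<bullet> (a \<times> e) + Vv \<bullet> e"
    unfolding V'_def Om by (simp add: cross3_simps forall_3)
  have "((b - a) \<bullet> (d \<times> e)) *\<^sub>R V' = 0" using decomp2[of "b - a" d e V'] i0 i1 i2 g0 g1 g2 by simp
  hence "V' = 0" using T by simp
  hence "Vv = \<alpha> *\<^sub>R (a \<times> d) + \<beta> *\<^sub>R (b \<times> e)" unfolding V'_def by simp
  with Om show ?thesis by blast
qed


lemma seg_ext:
  fixes w v w' v' p q x :: "real^3"
  assumes "w \<times> p + v = w' \<times> p + v'" "w \<times> q + v = w' \<times> q + v'" "x \<in> closed_segment p q"
  shows "w \<times> x + v = w' \<times> x + v'"
proof -
  obtain l where x: "x = (1 - l) *\<^sub>R p + l *\<^sub>R q" using assms(3) unfolding closed_segment_def by blast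
  have aff: "c \<times> x + z = (1 - l) *\<^sub>R (c \<times> p + z) + l *\<^sub>R (c \<times> q + z)" for c z
    unfolding x by (simp add: cross3_simps forall_3)
  show ?thesis using aff[of w v] aff[of w' v'] assms(1,2) by simp
qed


lemma hull_line:
  fixes a d :: "real^3" and t :: "real^4"
  assumes "x \<in> convex hull (range (\<lambda>k. a + t $ k *\<^sub>R d))"
  shows "\<exists>\<tau>. x = a + \<tau> *\<^sub>R d"
proof -
  have cv: "convex {x. \<exists>\<tau>. x = a + \<tau> *\<^sub>R d}"
  proof (rule convexI)
    fix x y :: "real^3" and u v :: real
    assume "x \<in> {x. \<exists>\<tau>. x = a + \<tau> *\<^sub>R d}" "y \<in> {x. \<exists>\<tau>. x = a + \<tau> *\<^sub>R d}" "0 \<le> u" "0 \<le> v" "u + v = 1"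
    then obtain \<tau>1 \<tau>2 where x: "x = a + \<tau>1 *\<^sub>R d" and y: "y = a + \<tau>2 *\<^sub>R d" and uv: "u + v = 1" by auto
    have "u *\<^sub>R x + v *\<^sub>R y = (u + v) *\<^sub>R a + (u * \<tau>1 + v * \<tau>2) *\<^sub>R d"
      unfolding x y by (simp add: algebra_simps)
    also have "\<dots> = a + (u * \<tau>1 + v * \<tau>2) *\<^sub>R d" using uv by simp
    finally show "u *\<^sub>R x + v *\<^sub>R y \<in> {x. \<exists>\<tau>. x = a + \<tau> *\<^sub>R d}" by blast
  qed
  have "convex hull (range (\<lambda>k. a + t $ k *\<^sub>R d)) \<subseteq> {x. \<exists>\<tau>. x = a + \<tau> *\<^sub>R d}"
    by (rule hull_minimal) (use cv in auto)
  with assms show ?thesis by blast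
qed


lemma rigid_core:
  fixes a d b e :: "real^3" and t s :: "real^4"
  assumes T: "(b - a) \<bullet> (d \<times> e) \<noteq> 0"
    and D: "Dr (s$1) (s$2) (s$3) (s$4) (t$1) (t$2) (t$3) (t$4) \<noteq> 0"
  shows "rigid_union {1..6} (strut_rods (a,d,b,e,t,s))"
proof -
  define R where "R = strut_rods (a,d,b,e,t,s)"
  define p where "p = (\<lambda>k::4. a + t$k *\<^sub>R d)"
  define q where "q = (\<lambda>k::4. b + s$k *\<^sub>R e)"
  have pt1: "strut_pt1 (a,d,b,e,t,s) = p" by (rule ext) (simp add: strut_pt1_def p_def)
  have pt2: "strut_pt2 (a,d,b,e,t,s) = q" by (rule ext) (simp add: strut_pt2_def q_def)
  have R1: "R 1 = convex hull (range p)" and R2: "R 2 = convex hull (range q)"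
    and R3: "R 3 = closed_segment (p 1) (q 1)" and R4: "R 4 = closed_segment (p 2) (q 2)"
    and R5: "R 5 = closed_segment (p 3) (q 3)" and R6: "R 6 = closed_segment (p 4) (q 4)"
    unfolding R_def strut_rods_def pt1 pt2 by simp_all
  have p1: "p k \<in> R 1" for k unfolding R1 by (rule hull_inc) simp
  have q2: "q k \<in> R 2" for k unfolding R2 by (rule hull_inc) simp
  show ?thesis unfolding rigid_union_def R_def[symmetric]
  proof (intro allI impI)
    fix u assume adm: "admissible_motion {1..6} R u"
    have ex: "\<forall>i\<in>{1..6}. euclid_motion_on (R i) (u i)"
      using adm unfolding admissible_motion_def by blast
    have exwv: "\<exists>wv. \<forall>x\<in>R i. u i x = fst wv \<times> x + snd wv" if i: "i \<in> {1..6}" for i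
    proof -
      have "euclid_motion_on (R i) (u i)" using ex i by (rule bspec)
      then obtain w v where wv: "\<forall>x\<in>R i. u i x = w \<times> x + v"
        unfolding euclid_motion_on_def by blast
      show ?thesis by (rule exI[of _ "(w, v)"]) (simp add: wv)
    qed
    define F where "F i = (SOME wv. \<forall>x\<in>R i. u i x = fst wv \<times> x + snd wv)" for i
    have F: "\<forall>x\<in>R i. u i x = fst (F i) \<times> x + snd (F i)" if "i \<in> {1..6}" for i
      unfolding F_def by (rule someI_ex) (rule exwv[OF that])
    define W where "W i = fst (F i)" for i
    define V where "V i = snd (F i)" for i
    have WV: "u i x = W i \<times> x + V i" if "i \<in> {1..6}" "x \<in> R i" for i x
      using F[OF that(1)] that(2) unfolding W_def V_def by (rule bspec)
    have cons: "u i x = u j x" if "i \<in> {1..6}" "j \<in> {1..6}" "x \<in> R i" "x \<in> R j" for i j x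
    proof -
      have C: "\<forall>i\<in>{1..6}. \<forall>j\<in>{1..6}. \<forall>x\<in>R i \<inter> R j. u i x = u j x"
        using adm unfolding admissible_motion_def by (rule conjunct2)
      have xin: "x \<in> R i \<inter> R j" using that(3,4) by (rule IntI)
      show ?thesis by (rule bspec[OF bspec[OF bspec[OF C that(1)] that(2)] xin])
    qed
    have bar: "(W 1 \<times> p k + V 1 - (W 2 \<times> q k + V 2)) \<bullet> (p k - q k) = 0"
      if i: "i \<in> {1..6}" and Ri: "R i = closed_segment (p k) (q k)" for i k
    proof -
      have pi: "p k \<in> R i" "q k \<in> R i" using Ri by auto
      have 1: "u i (p k) = u 1 (p k)" using cons[OF i _ pi(1) p1] by simp
      have 2: "u i (q k) = u 2 (q k)" using cons[OF i _ pi(2) q2] by simp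
      have e1: "W 1 \<times> p k + V 1 = W i \<times> p k + V i"
        using 1 WV[OF i pi(1)] WV[of 1 "p k", OF _ p1] by simp
      have e2: "W 2 \<times> q k + V 2 = W i \<times> q k + V i"
        using 2 WV[OF i pi(2)] WV[of 2 "q k", OF _ q2] by simp
      have "W 1 \<times> p k + V 1 - (W 2 \<times> q k + V 2) = W i \<times> (p k - q k)"
        unfolding e1 e2 by (simp add: Cross3.right_diff_distrib)
      then show ?thesis by (simp add: dot_cross_self)
    qed
    define Om where "Om = W 2 - W 1"
    define Vv where "Vv = V 2 - V 1"
    define g0 where "g0 = Om \<bullet> (a \<times> b) + Vv \<bullet> (b - a)"
    define g1 where "g1 = Om \<bullet> (a \<times> e) + Vv \<bullet> e"
    define g2 where "g2 = Om \<bullet> (d \<times> b) - Vv \<bullet> d"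
    define g3 where "g3 = Om \<bullet> (d \<times> e)"
    have hk: "g0 + s$k * g1 + t$k * g2 + s$k * t$k * g3 = 0"
      if "i \<in> {1..6}" "R i = closed_segment (p k) (q k)" for i k
      using bar[OF that] bar_full[where Wa="W 1" and Wb="W 2" and Va="V 1" and Vb="V 2" and a=a and d=d and b=b and e=e and s="s$k" and t="t$k"]
      unfolding p_def q_def g0_def g1_def g2_def g3_def Om_def Vv_def by simp
    have h1: "g0 + s$1 * g1 + t$1 * g2 + s$1 * t$1 * g3 = 0" by (rule hk[of 3]) (use R3 in auto)
    have h2: "g0 + s$2 * g1 + t$2 * g2 + s$2 * t$2 * g3 = 0" by (rule hk[of 4]) (use R4 in auto)
    have h3: "g0 + s$3 * g1 + t$3 * g2 + s$3 * t$3 * g3 = 0" by (rule hk[of 5]) (use R5 in auto)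
    have h4: "g0 + s$4 * g1 + t$4 * g2 + s$4 * t$4 * g3 = 0" by (rule hk[of 6]) (use R6 in auto)
    have gz: "g0 = 0 \<and> g1 = 0 \<and> g2 = 0 \<and> g3 = 0" by (rule solve4[OF h1 h2 h3 h4 D])
    obtain \<alpha> \<beta> where Om: "Om = \<alpha> *\<^sub>R d + \<beta> *\<^sub>R e" and Vv: "Vv = \<alpha> *\<^sub>R (a \<times> d) + \<beta> *\<^sub>R (b \<times> e)"
      using final_alg[OF T] gz unfolding g0_def g1_def g2_def g3_def by blast
    define \<omega> where "\<omega> = W 1 + \<alpha> *\<^sub>R d"
    define v where "v = V 1 + \<alpha> *\<^sub>R (a \<times> d)"
    have L1: "W 1 \<times> x + V 1 = \<omega> \<times> x + v" if xR: "x \<in> R 1" for x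
    proof -
      have "x \<in> convex hull (range (\<lambda>k. a + t$k *\<^sub>R d))" using xR unfolding R1 p_def .
      then obtain \<tau> where x: "x = a + \<tau> *\<^sub>R d" using hull_line by blast
      show ?thesis unfolding x \<omega>_def v_def by (simp add: cross3_simps forall_3)
    qed
    have W2: "W 2 = W 1 + (\<alpha> *\<^sub>R d + \<beta> *\<^sub>R e)" using Om unfolding Om_def by (simp add: algebra_simps)
    have V2: "V 2 = V 1 + (\<alpha> *\<^sub>R (a \<times> d) + \<beta> *\<^sub>R (b \<times> e))" using Vv unfolding Vv_def by (simp add: algebra_simps)
    have L2: "W 2 \<times> x + V 2 = \<omega> \<times> x + v" if xR: "x \<in> R 2" for x
    proof -
      have "x \<in> convex hull (range (\<lambda>k. b + s$k *\<^sub>R e))" using xR unfolding R2 q_def .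
      then obtain \<sigma> where x: "x = b + \<sigma> *\<^sub>R e" using hull_line by blast
      show ?thesis unfolding x \<omega>_def v_def W2 V2 by (simp add: cross3_simps forall_3)
    qed
    have LS: "u i x = \<omega> \<times> x + v" if i: "i \<in> {1..6}" and Ri: "R i = closed_segment (p k) (q k)" and x: "x \<in> R i" for i k x
    proof -
      have pi: "p k \<in> R i" "q k \<in> R i" using Ri by auto
      have "W i \<times> p k + V i = \<omega> \<times> p k + v"
        using cons[OF i _ pi(1) p1] WV[OF i pi(1)] WV[of 1 "p k", OF _ p1] L1[OF p1] by simp
      moreover have "W i \<times> q k + V i = \<omega> \<times> q k + v"
        using cons[OF i _ pi(2) q2] WV[OF i pi(2)] WV[of 2 "q k", OF _ q2] L2[OF q2] by simp
      ultimately have "W i \<times> x + V i = \<omega> \<times> x + v" using seg_ext x Ri by blast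
      then show ?thesis using WV[OF i x] by simp
    qed
    show "\<exists>\<omega> v. \<forall>i\<in>{1..6}. \<forall>x\<in>R i. u i x = \<omega> \<times> x + v"
    proof (intro exI ballI)
      fix i x assume i: "i \<in> {1..6::nat}" and x: "x \<in> R i"
      from i have "i = 1 \<or> i = 2 \<or> i = 3 \<or> i = 4 \<or> i = 5 \<or> i = 6" by auto
      then show "u i x = \<omega> \<times> x + v"
      proof (elim disjE)
        assume "i = 1" thus ?thesis using WV[OF i x] L1 x by simp
      next
        assume "i = 2" thus ?thesis using WV[OF i x] L2 x by simp
      next
        assume "i = 3" thus ?thesis using LS[OF i _ x] R3 by blast
      next
        assume "i = 4" thus ?thesis using LS[OF i _ x] R4 by blast
      next
        assume "i = 5" thus ?thesis using LS[OF i _ x] R5 by blast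
      next
        assume "i = 6" thus ?thesis using LS[OF i _ x] R6 by blast
      qed
    qed
  qed
qed

definition v3 :: "real \<Rightarrow> real \<Rightarrow> real \<Rightarrow> real^3" where
  "v3 x1 x2 x3 = x1 *\<^sub>R axis 1 1 + x2 *\<^sub>R axis 2 1 + x3 *\<^sub>R axis 3 1"

lemma v3_nth [simp]: "v3 x1 x2 x3 $ 1 = x1" "v3 x1 x2 x3 $ 2 = x2" "v3 x1 x2 x3 $ 3 = x3"
  by (simp_all add: v3_def axis_def)

type_synonym dom1 = "(real^3) \<times> (real^3) \<times> (real^3) \<times> (real^3) \<times> (real^3) \<times> (real^4)"
type_synonym dom2 = "(real^3) \<times> (real^3) \<times> (real^3) \<times> (real^3) \<times> (real^4) \<times> (real^3)"
type_synonym dom5 = "(real^3) \<times> (real^3) \<times> (real \<times> real) \<times> (real^3) \<times> (real^4) \<times> (real^4)"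
type_synonym dom6 = "(real^3) \<times> (real^3) \<times> (real^3) \<times> (real^4) \<times> (real^4)"
type_synonym dom7 = "(real^3) \<times> (real^3) \<times> (real^3) \<times> real \<times> (real^4) \<times> (real^4)"

definition m1 :: "dom1 \<Rightarrow> strut_param" where
  "m1 z = (let a = fst z; d = fst (snd z); b = fst (snd (snd z)); e = fst (snd (snd (snd z)));
      t = fst (snd (snd (snd (snd z)))); s = snd (snd (snd (snd (snd z)))) in
     (a, d, b, e, v4 (t$1) (t$2) (t$3)
        (- Dr (s$1) (s$2) (s$3) (s$4) (t$1) (t$2) (t$3) 0 / (Lr (s$1) (s$2) (s$3) (t$1) (t$2) (t$3) + s$4 * Kr (s$1) (s$2) (s$3) (t$1) (t$2) (t$3))), s))"

definition S1 :: "dom1 set" where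
  "S1 = {z. let t = fst (snd (snd (snd (snd z)))); s = snd (snd (snd (snd (snd z)))) in
    Lr (s$1) (s$2) (s$3) (t$1) (t$2) (t$3) + s$4 * Kr (s$1) (s$2) (s$3) (t$1) (t$2) (t$3) \<noteq> 0}"

definition m2 :: "dom2 \<Rightarrow> strut_param" where
  "m2 z = (let a = fst z; d = fst (snd z); b = fst (snd (snd z)); e = fst (snd (snd (snd z)));
      t = fst (snd (snd (snd (snd z)))); s = snd (snd (snd (snd (snd z)))) in
     (a, d, b, e, t, v4 (s$1) (s$2) (s$3)
        (- Lr (s$1) (s$2) (s$3) (t$1) (t$2) (t$3) / Kr (s$1) (s$2) (s$3) (t$1) (t$2) (t$3))))"

definition S2 :: "dom2 set" where
  "S2 = {z. let t = fst (snd (snd (snd (snd z)))); s = snd (snd (snd (snd (snd z)))) in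
    Kr (s$1) (s$2) (s$3) (t$1) (t$2) (t$3) \<noteq> 0}"

definition m3 :: "dom1 \<Rightarrow> strut_param" where
  "m3 z = (let a = fst z; d = fst (snd z); b = fst (snd (snd z)); e = fst (snd (snd (snd z)));
      t = fst (snd (snd (snd (snd z)))); s = snd (snd (snd (snd (snd z)))) in
     (a, d, b, e, v4 (t$1) (t$2) (t$1 + (s$3 - s$1) * (t$2 - t$1) / (s$2 - s$1)) (t$3), s))"

definition S3 :: "dom1 set" where
  "S3 = {z. let s = snd (snd (snd (snd (snd z)))) in s$2 - s$1 \<noteq> 0}"

definition m4 :: "dom2 \<Rightarrow> strut_param" where
  "m4 z = (let a = fst z; d = fst (snd z); b = fst (snd (snd z)); e = fst (snd (snd (snd z)));
      t = fst (snd (snd (snd (snd z)))); s = snd (snd (snd (snd (snd z)))) in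
     (a, d, b, e, t, v4 (s$1) (s$1) (s$2) (s$3)))"

definition m5 :: "dom5 \<Rightarrow> strut_param" where
  "m5 z = (let a = fst z; d = fst (snd z); lm = fst (snd (snd z)); e = fst (snd (snd (snd z)));
      t = fst (snd (snd (snd (snd z)))); s = snd (snd (snd (snd (snd z)))) in
     (a, d, a + fst lm *\<^sub>R d + snd lm *\<^sub>R e, e, t, s))"

definition m6 :: "dom6 \<Rightarrow> strut_param" where
  "m6 z = (let a = fst z; b = fst (snd z); e = fst (snd (snd z));
      t = fst (snd (snd (snd z))); s = snd (snd (snd (snd z))) in
     (a, 0, b, e, t, s))"

definition m7 :: "dom7 \<Rightarrow> strut_param" where
  "m7 z = (let a = fst z; d = fst (snd z); b = fst (snd (snd z)); l = fst (snd (snd (snd z)));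
      t = fst (snd (snd (snd (snd z)))); s = snd (snd (snd (snd (snd z)))) in
     (a, d, b, l *\<^sub>R d, t, s))"

lemma neg1: "negligible (m1 ` S1)"
proof (rule negligible_differentiable_image_lowdim)
  show "m1 differentiable_on S1"
    unfolding m1_def S1_def Let_def Dr_def Lr_def Kr_def
    by (rule differentiable_at_imp_differentiable_on) (auto intro!: derivative_intros)
qed simp

lemma neg2: "negligible (m2 ` S2)"
proof (rule negligible_differentiable_image_lowdim)
  show "m2 differentiable_on S2"
    unfolding m2_def S2_def Let_def Lr_def Kr_def
    by (rule differentiable_at_imp_differentiable_on) (auto intro!: derivative_intros)
qed simp

lemma neg3: "negligible (m3 ` S3)"
proof (rule negligible_differentiable_image_lowdim)
  show "m3 differentiable_on S3"
    unfolding m3_def S3_def Let_def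
    by (rule differentiable_at_imp_differentiable_on) (auto intro!: derivative_intros)
qed simp

lemma neg4: "negligible (range m4)"
proof (rule negligible_differentiable_image_lowdim)
  show "m4 differentiable_on UNIV"
    unfolding m4_def Let_def
    by (rule differentiable_at_imp_differentiable_on) (auto intro!: derivative_intros)
qed simp

lemma neg5: "negligible (range m5)"
proof (rule negligible_differentiable_image_lowdim)
  show "m5 differentiable_on UNIV"
    unfolding m5_def Let_def
    by (rule differentiable_at_imp_differentiable_on) (auto intro!: derivative_intros)
qed simp

lemma neg6: "negligible (range m6)"
proof (rule negligible_differentiable_image_lowdim)
  show "m6 differentiable_on UNIV"
    unfolding m6_def Let_def
    by (rule differentiable_at_imp_differentiable_on) (auto intro!: derivative_intros)
qed simp

lemma neg7: "negligible (range m7)"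
proof (rule negligible_differentiable_image_lowdim)
  show "m7 differentiable_on UNIV"
    unfolding m7_def Let_def
    by (rule differentiable_at_imp_differentiable_on) (auto intro!: derivative_intros)
qed simp

lemma coverD:
  fixes a d b e :: "real^3" and t s :: "real^4"
  assumes Dz: "Dr (s$1) (s$2) (s$3) (s$4) (t$1) (t$2) (t$3) (t$4) = 0"
  shows "(a,d,b,e,t,s) \<in> m1 ` S1 \<union> m2 ` S2 \<union> m3 ` S3 \<union> range m4"
proof -
  define K where "K = Kr (s$1) (s$2) (s$3) (t$1) (t$2) (t$3)"
  define L where "L = Lr (s$1) (s$2) (s$3) (t$1) (t$2) (t$3)"
  define C where "C = L + s$4 * K"
  define D0 where "D0 = Dr (s$1) (s$2) (s$3) (s$4) (t$1) (t$2) (t$3) 0"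
  have split: "t$4 * C = - D0" using Dz Dr_t4[of "s$1" "s$2" "s$3" "s$4" "t$1" "t$2" "t$3" "t$4"]
    unfolding C_def K_def L_def D0_def by linarith
  consider (c1) "C \<noteq> 0" | (c2) "C = 0" "K \<noteq> 0" | (c3) "K = 0" "s$2 - s$1 \<noteq> 0" | (c4) "s$2 - s$1 = 0"
    by blast
  then show ?thesis
  proof cases
    case c1
    have t4: "- D0 / C = t$4" using split c1 by (simp add: field_simps)
    have eq: "m1 (a,d,b,e, v3 (t$1) (t$2) (t$3), s) = (a,d,b,e,t,s)"
      unfolding m1_def Let_def using t4 unfolding D0_def C_def K_def L_def
      by (simp add: vec_eq_iff forall_4)
    have mem: "(a,d,b,e, v3 (t$1) (t$2) (t$3), s) \<in> S1"
      using c1 unfolding S1_def Let_def C_def K_def L_def by simp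
    have "(a,d,b,e,t,s) \<in> m1 ` S1" unfolding eq[symmetric] using mem by (rule imageI)
    then show ?thesis by blast
  next
    case c2
    have s4: "- L / K = s$4" using c2 unfolding C_def by (simp add: field_simps)
    have eq: "m2 (a,d,b,e,t, v3 (s$1) (s$2) (s$3)) = (a,d,b,e,t,s)"
      unfolding m2_def Let_def using s4 unfolding K_def L_def
      by (simp add: vec_eq_iff forall_4)
    have mem: "(a,d,b,e,t, v3 (s$1) (s$2) (s$3)) \<in> S2"
      using c2 unfolding S2_def Let_def K_def by simp
    have "(a,d,b,e,t,s) \<in> m2 ` S2" unfolding eq[symmetric] using mem by (rule imageI)
    then show ?thesis by blast
  next
    case c3
    have t3: "t$1 + (s$3 - s$1) * (t$2 - t$1) / (s$2 - s$1) = t$3"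
      using c3 unfolding K_def Kr_def by (simp add: field_simps)
    have eq: "m3 (a,d,b,e, v3 (t$1) (t$2) (t$4), s) = (a,d,b,e,t,s)"
      unfolding m3_def Let_def using t3
      by (simp add: vec_eq_iff forall_4)
    have mem: "(a,d,b,e, v3 (t$1) (t$2) (t$4), s) \<in> S3"
      using c3 unfolding S3_def Let_def by simp
    have "(a,d,b,e,t,s) \<in> m3 ` S3" unfolding eq[symmetric] using mem by (rule imageI)
    then show ?thesis by blast
  next
    case c4
    have eq: "m4 (a,d,b,e,t, v3 (s$1) (s$3) (s$4)) = (a,d,b,e,t,s)"
      unfolding m4_def Let_def using c4
      by (simp add: vec_eq_iff forall_4)
    have "(a,d,b,e,t,s) \<in> range m4" unfolding eq[symmetric] by (rule rangeI)
    then show ?thesis by blast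
  qed
qed

lemma coverT:
  fixes a d b e :: "real^3" and t s :: "real^4"
  assumes Tz: "(b - a) \<bullet> (d \<times> e) = 0"
  shows "(a,d,b,e,t,s) \<in> range m5 \<union> range m6 \<union> range m7"
proof -
  define n where "n = d \<times> e"
  consider (c1) "n \<noteq> 0" | (c2) "d = 0" | (c3) "n = 0" "d \<noteq> 0" by blast
  then show ?thesis
  proof cases
    case c1
    hence nn: "n \<bullet> n \<noteq> 0" by simp
    define l where "l = (((b - a) \<times> e) \<bullet> n) / (n \<bullet> n)"
    define m where "m = ((d \<times> (b - a)) \<bullet> n) / (n \<bullet> n)"
    have eq0: "(n \<bullet> n) *\<^sub>R (b - a) = (((b - a) \<times> e) \<bullet> n) *\<^sub>R d + ((d \<times> (b - a)) \<bullet> n) *\<^sub>R e"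
      using decomp[of d e "b - a"] Tz unfolding n_def by simp
    have "b - a = (1 / (n \<bullet> n)) *\<^sub>R ((n \<bullet> n) *\<^sub>R (b - a))" using nn by simp
    also have "\<dots> = l *\<^sub>R d + m *\<^sub>R e" unfolding eq0 l_def m_def
      by (simp add: scaleR_right_distrib)
    finally have bb: "b = a + l *\<^sub>R d + m *\<^sub>R e" by (simp add: algebra_simps)
    have eq: "m5 (a,d,(l,m),e,t,s) = (a,d,b,e,t,s)" unfolding m5_def Let_def bb by simp
    have "(a,d,b,e,t,s) \<in> range m5" unfolding eq[symmetric] by (rule rangeI)
    then show ?thesis by blast
  next
    case c2
    have eq: "m6 (a,b,e,t,s) = (a,d,b,e,t,s)" unfolding m6_def Let_def c2 by simp
    have "(a,d,b,e,t,s) \<in> range m6" unfolding eq[symmetric] by (rule rangeI)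
    then show ?thesis by blast
  next
    case c3
    have dd: "d \<bullet> d \<noteq> 0" using c3 by simp
    have "e \<times> d = 0" using c3 unfolding n_def by (metis cross_skew neg_equal_0_iff_equal)
    hence "(d \<bullet> d) *\<^sub>R e - (d \<bullet> e) *\<^sub>R d = 0" using Lagrange[of d e d] by simp
    hence "(d \<bullet> d) *\<^sub>R e = (d \<bullet> e) *\<^sub>R d" by simp
    hence "e = (1 / (d \<bullet> d)) *\<^sub>R ((d \<bullet> e) *\<^sub>R d)" using dd by (metis divide_self_if scaleR_one scaleR_scaleR divide_inverse mult.commute mult_1 inverse_eq_divide nonzero_divide_eq_eq)
    hence ee: "e = ((d \<bullet> e) / (d \<bullet> d)) *\<^sub>R d" by simp
    have eq: "m7 (a,d,b,(d \<bullet> e) / (d \<bullet> d),t,s) = (a,d,b,e,t,s)" unfolding m7_def Let_def using ee by simp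
    have "(a,d,b,e,t,s) \<in> range m7" unfolding eq[symmetric] by (rule rangeI)
    then show ?thesis by blast
  qed
qed

theorem mainTheorem5:
  shows "negligible {\<theta> :: strut_param. \<not> rigid_union {1..6} (strut_rods \<theta>)}"
proof (rule negligible_subset)
  show "negligible (m1 ` S1 \<union> m2 ` S2 \<union> m3 ` S3 \<union> range m4 \<union> (range m5 \<union> range m6 \<union> range m7))"
    using neg1 neg2 neg3 neg4 neg5 neg6 neg7 by simp
  show "{\<theta> :: strut_param. \<not> rigid_union {1..6} (strut_rods \<theta>)}
      \<subseteq> m1 ` S1 \<union> m2 ` S2 \<union> m3 ` S3 \<union> range m4 \<union> (range m5 \<union> range m6 \<union> range m7)"
  proof
    fix \<theta> :: strut_param
    assume th: "\<theta> \<in> {\<theta>. \<not> rigid_union {1..6} (strut_rods \<theta>)}"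
    obtain a d b e t s where th': "\<theta> = (a,d,b,e,t,s)" by (metis prod_cases6)
    have "\<not> rigid_union {1..6} (strut_rods (a,d,b,e,t,s))" using th th' by simp
    hence "(b - a) \<bullet> (d \<times> e) = 0 \<or> Dr (s$1) (s$2) (s$3) (s$4) (t$1) (t$2) (t$3) (t$4) = 0"
      using rigid_core by blast
    thus "\<theta> \<in> m1 ` S1 \<union> m2 ` S2 \<union> m3 ` S3 \<union> range m4 \<union> (range m5 \<union> range m6 \<union> range m7)"
      unfolding th' using coverD[of s t a d b e] coverT[of b a d e t s] by blast
  qed
qed

end
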